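(* Let $\lambda\in B^{(k,r)}$ and let $\lambda'$ be an enlargement of $\lambda$. Then $\lambda'$ is intertwined with $\lambda$.
   Context: Let $P=\mathbb Z^n$. For $\lambda\in P$, $\rho(\lambda)$ is the unique permutation of $(\frac{n-1}2,\dots,-\frac{n-1}2)$ with $\rho(\lambda)_i>\rho(\lambda)_j$ iff $\lambda_i>\lambda_j$ or ($\lambda_i=\lambda_j$, $i<j$); let $(i_1,\dots,i_n)$ be the indices with $\rho(\lambda)_{i_a}=\frac{n+1}2-a$. $\omega\lambda=(\lambda_2,\dots,\lambda_n,\lambda_1+1)$; $s_i\lambda$ swaps $\lambda_i,\lambda_{i+1}$. Fix $1\le k\le n-1$, $r\ge2$, $g=\gcd(k+1,r-1)$, $\tau=e^{2\pi\sqrt{-1}/(r-1)}$, specialization $(\ast)$: $t=u^{(r-1)/g}$, $q=\tau u^{-(k+1)/g}$. $u_\lambda(f)=f(t^{-\rho(\lambda)_1}q^{-\lambda_1},\dots,t^{-\rho(\lambda)_n}q^{-\lambda_n})$. "Intertwined" is the equivalence relation on $P$ generated by $\lambda\sim\omega\lambda$ and by $\lambda\sim s_i\lambda$ whenever $s_i\lambda\ne\lambda$ and, at $(\ast)$, $u_\lambda(x_i/x_{i+1})\notin\{1,t,t^{-1}\}$. For $a\ge2,b\ge1$, $(i,j)$ is a neighborhood of type $(a,b)$ in $\lambda$ if $\rho(\lambda)_i-\rho(\lambda)_j=a-1$ and either $\lambda_i-\lambda_j\le b-1$, or $\lambda_i-\lambda_j=b$ and $j<i$. $B^{(k,r)}$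 is the set of $\lambda\in P$ having no neighborhood of type $(k+1,r-1)$. An enlargement of $\lambda$ is $\lambda'\in P$ with $\rho(\lambda')=\rho(\lambda)$ and $\lambda'_{i_a}-\lambda'_{i_{a+1}}>\max\{[\frac n{k+1}](r-1),\lambda_{i_a}-\lambda_{i_{a+1}}\}$ for all $1\le a\le n-1$. *)

theory Defs
  imports Complex_Main "HOL-Library.Multiset"
begin

text \<open>Elements of P = Z^n are integer lists of length n; positions are 0-based
  (paper index i corresponds to list position i-1).\<close>

definition rho_values :: "nat \<Rightarrow> rat list" where
  "rho_values n = map (\<lambda>a. (of_nat n + 1) / 2 - of_nat a) [1..<n+1]"

definition rho :: "int list \<Rightarrow> rat list" where
  "rho l = (THE p. mset p = mset (rho_values (length l)) \<and>
      (\<forall>i<length l. \<forall>j<length l. p ! i > p ! j \<longleftrightarrow> (l ! i > l ! j \<or> (l ! i = l ! j \<and> i < j))))"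

definition idx :: "int list \<Rightarrow> nat \<Rightarrow> nat" where
  "idx l a = (THE i. i < length l \<and> rho l ! i = (of_nat (length l) + 1) / 2 - of_nat a)"

definition omega :: "int list \<Rightarrow> int list" where
  "omega l = tl l @ [hd l + 1]"

text \<open>swap l i = s_{i+1} lambda (swaps positions i and i+1, 0-based).\<close>
definition swap :: "int list \<Rightarrow> nat \<Rightarrow> int list" where
  "swap l i = l[i := l ! (i+1), i+1 := l ! i]"

text \<open>Specialization: t = u^((r-1)/g), q = tau * u^(-(k+1)/g), u an indeterminate.
  A (generalized) monomial c * u^e is represented as the pair (c, e).\<close>

definition gg :: "nat \<Rightarrow> nat \<Rightarrow> nat" where
  "gg k r = gcd (k+1) (r-1)"

definition tau :: "nat \<Rightarrow> complex" where
  "tau r = cis (2 * pi / real (r - 1))"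

definition mono_div :: "complex \<times> rat \<Rightarrow> complex \<times> rat \<Rightarrow> complex \<times> rat" where
  "mono_div x y = (fst x / fst y, snd x - snd y)"

definition t_mono :: "nat \<Rightarrow> nat \<Rightarrow> complex \<times> rat" where
  "t_mono k r = (1, of_nat (r - 1) / of_nat (gg k r))"

definition t_inv_mono :: "nat \<Rightarrow> nat \<Rightarrow> complex \<times> rat" where
  "t_inv_mono k r = (1, - of_nat (r - 1) / of_nat (gg k r))"

text \<open>The value t^(-rho(lambda)_i) q^(-lambda_i) of the variable x_i under u_lambda at (*):
  coefficient tau^(-lambda_i), exponent of u equal to
  -rho_i (r-1)/g + lambda_i (k+1)/g.\<close>
definition xval :: "nat \<Rightarrow> nat \<Rightarrow> int list \<Rightarrow> nat \<Rightarrow> complex \<times> rat" where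
  "xval k r l i = (tau r powi (- (l ! i)),
     (- (rho l ! i) * of_nat (r - 1) + of_int (l ! i) * of_nat (k + 1)) / of_nat (gg k r))"

definition u_ratio :: "nat \<Rightarrow> nat \<Rightarrow> int list \<Rightarrow> nat \<Rightarrow> complex \<times> rat" where
  "u_ratio k r l i = mono_div (xval k r l i) (xval k r l (i+1))"

definition inter_step :: "nat \<Rightarrow> nat \<Rightarrow> int list \<Rightarrow> int list \<Rightarrow> bool" where
  "inter_step k r l m \<longleftrightarrow> m = omega l \<or>
     (\<exists>i. i + 1 < length l \<and> m = swap l i \<and> m \<noteq> l \<and>
          u_ratio k r l i \<notin> {(1, 0), t_mono k r, t_inv_mono k r})"

definition intertwined :: "nat \<Rightarrow> nat \<Rightarrow> int list \<Rightarrow> int list \<Rightarrow> bool" where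
  "intertwined k r = (\<lambda>x y. inter_step k r x y \<or> inter_step k r y x)\<^sup>*\<^sup>*"

definition neighborhood :: "nat \<Rightarrow> nat \<Rightarrow> int list \<Rightarrow> nat \<Rightarrow> nat \<Rightarrow> bool" where
  "neighborhood a b l i j \<longleftrightarrow> i < length l \<and> j < length l \<and>
     rho l ! i - rho l ! j = of_nat a - 1 \<and>
     (l ! i - l ! j \<le> int b - 1 \<or> (l ! i - l ! j = int b \<and> j < i))"

definition in_B :: "nat \<Rightarrow> nat \<Rightarrow> int list \<Rightarrow> bool" where
  "in_B k r l \<longleftrightarrow> \<not> (\<exists>i j. neighborhood (k+1) (r-1) l i j)"

definition enlargement :: "nat \<Rightarrow> nat \<Rightarrow> int list \<Rightarrow> int list \<Rightarrow> bool" where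
  "enlargement k r l l' \<longleftrightarrow> length l' = length l \<and> rho l' = rho l \<and>
     (\<forall>a. 1 \<le> a \<and> a \<le> length l - 1 \<longrightarrow>
        l' ! idx l a - l' ! idx l (a+1) >
          max (int (length l div (k+1)) * (int r - 1)) (l ! idx l a - l ! idx l (a+1)))"

end

theory Submission
  imports Defs
begin



definition below :: "int list \<Rightarrow> nat \<Rightarrow> nat \<Rightarrow> bool" where
  "below l z i \<longleftrightarrow> l!z < l!i \<or> (l!z = l!i \<and> i < z)"

definition RR :: "int list \<Rightarrow> nat \<Rightarrow> nat" where
  "RR l i = card {z. z < length l \<and> below l z i}"

lemma below_trans: "below l a b \<Longrightarrow> below l b c \<Longrightarrow> below l a c"
  unfolding below_def by auto

lemma below_irrefl: "\<not> below l a a" unfolding below_def by auto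

lemma below_total: "a \<noteq> b \<Longrightarrow> below l a b \<or> below l b a"
  unfolding below_def by auto

lemma below_asym: "below l a b \<Longrightarrow> \<not> below l b a"
  unfolding below_def by auto

lemma RR_less: assumes "below l j i" "j < length l" shows "RR l j < RR l i"
proof -
  have "{z. z < length l \<and> below l z j} \<subset> {z. z < length l \<and> below l z i}"
    using assms below_trans below_irrefl by blast
  then show ?thesis unfolding RR_def by (intro psubset_card_mono) auto
qed

lemma RR_less_iff: assumes "i < length l" "j < length l"
  shows "RR l j < RR l i \<longleftrightarrow> below l j i"
proof
  assume h: "RR l j < RR l i"
  show "below l j i"
  proof (rule ccontr)
    assume "\<not> below l j i"
    then have "i = j \<or> below l i j" using below_total by blast
    then show False using h RR_less[of l i j] assms by force
  qed
qed (use RR_less assms in auto)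

lemma RR_bound: assumes "i < length l" shows "RR l i < length l"
proof -
  have "{z. z < length l \<and> below l z i} \<subseteq> {0..<length l} - {i}"
    using below_irrefl by auto
  then have "RR l i \<le> card ({0..<length l} - {i})" unfolding RR_def
    by (intro card_mono) auto
  then show ?thesis using assms by simp
qed

lemma RR_inj: "inj_on (RR l) {0..<length l}"
proof (rule inj_onI)
  fix x y assume "x \<in> {0..<length l}" "y \<in> {0..<length l}" "RR l x = RR l y"
  then show "x = y" using RR_less_iff[of x l y] RR_less_iff[of y l x] below_total[of x y l]
    by auto
qed

lemma RR_image: "RR l ` {0..<length l} = {0..<length l}"
proof -
  have "RR l ` {0..<length l} \<subseteq> {0..<length l}" using RR_bound by auto
  then show ?thesis using endo_inj_surj RR_inj by blast
qed

lemma RR_surj: assumes "s < length l" obtains x where "x < length l" "RR l x = s"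
  using RR_image[of l] assms by (metis atLeastLessThan_iff imageE zero_le)

lemma RR_le_val: assumes "x < length l" "y < length l" "RR l y \<le> RR l x"
  shows "l!y \<le> l!x \<and> (l!y = l!x \<longrightarrow> x \<le> y)"
proof (cases "x = y")
  case False
  then have "RR l y \<noteq> RR l x" using RR_inj[of l] assms unfolding inj_on_def by auto
  then have "RR l y < RR l x" using assms by auto
  then have "below l y x" using RR_less_iff assms by blast
  then show ?thesis unfolding below_def by auto
qed simp


lemma order_iso_eq:
  fixes xs ys :: "'a::linorder list"
  assumes len: "length xs = length ys" and ms: "mset xs = mset ys" and dx: "distinct xs"
    and ord: "\<And>i j. i < length xs \<Longrightarrow> j < length xs \<Longrightarrow> (xs!j < xs!i \<longleftrightarrow> ys!j < ys!i)"
  shows "xs = ys"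
proof -
  have dy: "distinct ys" using mset_eq_imp_distinct_iff[OF ms] dx by simp
  have st: "set xs = set ys" using arg_cong[OF ms, of set_mset] by simp
  have cnt: "card {j. j < length zs \<and> zs!j < a} = card {v \<in> set zs. v < a}"
    if "distinct zs" for zs :: "'a list" and a
  proof -
    have img: "(nth zs) ` {j. j < length zs \<and> zs!j < a} = {v \<in> set zs. v < a}"
      by (auto simp: in_set_conv_nth)
    have inj: "inj_on (nth zs) {j. j < length zs \<and> zs!j < a}"
      using inj_on_nth[OF that] by auto
    show ?thesis using card_image[OF inj] unfolding img by (rule sym)
  qed
  show ?thesis
  proof (rule nth_equalityI[OF len])
    fix i assume i: "i < length xs"
    have S: "{j. j < length xs \<and> xs!j < xs!i} = {j. j < length ys \<and> ys!j < ys!i}"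
      using ord[OF i] len by auto
    have "card {v \<in> set xs. v < xs!i} = card {j. j < length xs \<and> xs!j < xs!i}"
      by (rule sym, rule cnt[OF dx])
    also have "\<dots> = card {j. j < length ys \<and> ys!j < ys!i}" unfolding S ..
    also have "\<dots> = card {v \<in> set ys. v < ys!i}" by (rule cnt[OF dy])
    finally have eq: "card {v \<in> set xs. v < xs!i} = card {v \<in> set xs. v < ys!i}"
      unfolding st .
    have xi: "xs!i \<in> set xs" using i by simp
    have yi: "ys!i \<in> set xs" unfolding st using i len by simp
    show "xs!i = ys!i"
    proof (rule ccontr)
      assume "xs!i \<noteq> ys!i"
      then consider "xs!i < ys!i" | "ys!i < xs!i" by fastforce
      then show False
      proof cases
        case 1
        then have "{v \<in> set xs. v < xs!i} \<subset> {v \<in> set xs. v < ys!i}" using xi by auto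
        then have "card {v \<in> set xs. v < xs!i} < card {v \<in> set xs. v < ys!i}"
          by (intro psubset_card_mono) auto
        then show False using eq by simp
      next
        case 2
        then have "{v \<in> set xs. v < ys!i} \<subset> {v \<in> set xs. v < xs!i}" using yi by auto
        then have "card {v \<in> set xs. v < ys!i} < card {v \<in> set xs. v < xs!i}"
          by (intro psubset_card_mono) auto
        then show False using eq by simp
      qed
    qed
  qed
qed

definition rhoR :: "int list \<Rightarrow> rat list" where
  "rhoR l = map (\<lambda>i. of_nat (RR l i) - (of_nat (length l) - 1) / 2) [0..<length l]"

lemma rho_values_alt: "rho_values n = rev (map (\<lambda>c. of_nat c - (of_nat n - 1) / 2) [0..<n])"
proof (rule nth_equalityI)
  show "length (rho_values n) = length (rev (map (\<lambda>c. of_nat c - (of_nat n - 1) / 2) [0..<n]))"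
    by (simp add: rho_values_def del: upt_Suc)
next
  fix a assume "a < length (rho_values n)"
  then have a: "a < n" by (simp add: rho_values_def del: upt_Suc)
  then have "of_nat (n - Suc a) = (of_nat n - of_nat a - 1 :: rat)" by (simp add: of_nat_diff)
  then show "rho_values n ! a = rev (map (\<lambda>c. of_nat c - (of_nat n - 1) / 2) [0..<n]) ! a"
    using a by (simp add: rho_values_def rev_nth field_simps del: upt_Suc)
qed

lemma mset_rhoR: "mset (rhoR l) = mset (rho_values (length l))"
proof -
  let ?n = "length l"
  let ?f = "\<lambda>c. of_nat c - (of_nat ?n - 1) / (2::rat)"
  have "distinct (map (RR l) [0..<?n])" using RR_inj[of l] by (simp add: distinct_map)
  moreover have "set (map (RR l) [0..<?n]) = set [0..<?n]" using RR_image[of l] by simp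
  ultimately have "mset (map (RR l) [0..<?n]) = mset [0..<?n]"
    using set_eq_iff_mset_eq_distinct[of "map (RR l) [0..<?n]" "[0..<?n]"] by simp
  then have "mset (map ?f (map (RR l) [0..<?n])) = mset (map ?f [0..<?n])"
    by (metis mset_map)
  then show ?thesis unfolding rhoR_def rho_values_alt by (simp add: comp_def)
qed

lemma rho_eq: "rho l = rhoR l"
proof -
  let ?n = "length l"
  let ?P = "\<lambda>p. mset p = mset (rho_values ?n) \<and>
      (\<forall>i<?n. \<forall>j<?n. p ! i > p ! j \<longleftrightarrow> (l ! i > l ! j \<or> (l ! i = l ! j \<and> i < j)))"
  have ordR: "rhoR l ! j < rhoR l ! i \<longleftrightarrow> below l j i" if "i < ?n" "j < ?n" for i j
    using that RR_less_iff[of i l j] by (simp add: rhoR_def)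
  have P1: "?P (rhoR l)" using mset_rhoR ordR unfolding below_def by auto
  have uniq: "p = rhoR l" if "?P p" for p
  proof -
    have lp: "length p = ?n" using that mset_rhoR
      by (metis size_mset length_map rhoR_def length_upt minus_nat.diff_0)
    have dR: "distinct (rhoR l)"
    proof -
      have "inj_on (\<lambda>i. of_nat (RR l i) - (of_nat (length l) - 1) / (2::rat)) {0..<?n}"
        using RR_inj[of l] unfolding inj_on_def by auto
      then show ?thesis by (simp add: rhoR_def distinct_map)
    qed
    show ?thesis
    proof (rule sym, rule order_iso_eq)
      show "length (rhoR l) = length p" using lp by (simp add: rhoR_def)
      show "mset (rhoR l) = mset p" using that mset_rhoR by simp
      show "distinct (rhoR l)" by fact
      fix i j assume "i < length (rhoR l)" "j < length (rhoR l)"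
      then have ij: "i < ?n" "j < ?n" by (auto simp: rhoR_def)
      show "rhoR l ! j < rhoR l ! i \<longleftrightarrow> p ! j < p ! i"
        using ordR[OF ij] that ij unfolding below_def by auto
    qed
  qed
  show ?thesis unfolding rho_def using the_equality[of ?P, OF P1 uniq] by simp
qed

lemma rho_nth: "i < length l \<Longrightarrow> rho l ! i = of_nat (RR l i) - (of_nat (length l) - 1) / 2"
  by (simp add: rho_eq rhoR_def)

lemma length_rho: "length (rho l) = length l" by (simp add: rho_eq rhoR_def)




definition blk :: "nat \<Rightarrow> nat \<Rightarrow> int \<Rightarrow> int \<Rightarrow> bool" where
  "blk k r D e \<longleftrightarrow> D \<noteq> 0 \<and> int (r-1) dvd D \<and> \<bar>(D div int (r-1)) * int (k+1) - e\<bar> \<le> 1"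

lemma tau_ratio_dvd:
  assumes r: "2 \<le> r" and h: "tau r powi (- a) / tau r powi (- b) = 1"
  shows "int (r-1) dvd (a - b)"
proof -
  define c where "c = 2 * pi / real (r - 1)"
  have rp: "real (r - 1) > 0" using r by simp
  have cr: "c * real (r-1) = 2 * pi" unfolding c_def using rp by simp
  have "tau r powi (- a) / tau r powi (- b) = cis (of_int (-a) * c - of_int (-b) * c)"
    unfolding tau_def cis_power_int c_def by (simp add: cis_divide)
  with h have "Re (cis (of_int (-a) * c - of_int (-b) * c)) = 1"
    by simp
  then have "cos (of_int (-a) * c - of_int (-b) * c) = 1" by simp
  then obtain m :: int where m: "of_int (-a) * c - of_int (-b) * c = of_int m * 2 * pi"
    using cos_one_2pi_int by blast
  have "of_int (b - a) * c = of_int m * 2 * pi" using m by (simp add: algebra_simps)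
  then have "of_int (b - a) * c * real (r-1) = of_int m * 2 * pi * real (r-1)" by simp
  then have "of_int (b - a) * (2 * pi) = (of_int m * real (r-1)) * (2 * pi)"
    unfolding mult.assoc cr by (simp add: algebra_simps)
  then have "real_of_int (b - a) = of_int m * real (r-1)" by simp
  also have "\<dots> = real_of_int (m * int (r-1))" by simp
  finally have "b - a = m * int (r-1)" by (rule of_int_eq_iff[THEN iffD1])
  then have "a - b = int (r-1) * (- m)" by (simp add: algebra_simps)
  then show ?thesis by (rule dvdI)
qed

lemma div3_aux:
  fixes Z R G :: rat
  assumes "G \<noteq> 0" "Z / G \<in> {0, R / G, - R / G}"
  shows "Z \<in> {0, R, - R}"
proof -
  from assms(2) consider "Z / G = 0" | "Z / G = R / G" | "Z / G = - R / G" by blast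
  then show ?thesis
  proof cases
    case 1 then show ?thesis using assms(1) by simp
  next
    case 2 then have "Z = R" using assms(1) by (simp add: divide_cancel_right)
    then show ?thesis by simp
  next
    case 3 then have "Z = - R" using assms(1) by (simp add: field_simps)
    then show ?thesis by simp
  qed
qed

lemma int3_aux:
  fixes y c :: int
  assumes "c > 0" "of_int (c * y) \<in> {0 :: rat, of_int c, - of_int c}"
  shows "y \<in> {0, 1, -1}"
proof -
  from assms(2) consider "of_int (c * y) = (0::rat)" | "of_int (c * y) = (of_int c :: rat)"
    | "of_int (c * y) = (- of_int c :: rat)" by blast
  then have "c * y = c * 0 \<or> c * y = c * 1 \<or> c * y = c * (-1)"
  proof cases
    case 1 then show ?thesis by simp
  next
    case 2 then have "c * y = c" using of_int_eq_iff by blast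
    then show ?thesis by simp
  next
    case 3 then have "of_int (c * y) = (of_int (- c) :: rat)" by simp
    then have "c * y = - c" using of_int_eq_iff by blast
    then show ?thesis by simp
  qed
  then have "y = 0 \<or> y = 1 \<or> y = -1" using assms(1) by (simp only: mult_cancel_left) simp
  then show ?thesis by simp
qed

lemma swap_step:
  assumes r: "2 \<le> r" and i: "i + 1 < length C" and ne: "C!i \<noteq> C!(i+1)"
    and nb: "\<not> blk k r (C!i - C!(i+1)) (int (RR C i) - int (RR C (i+1)))"
  shows "inter_step k r C (swap C i)"
proof -
  let ?D = "C!i - C!(i+1)" and ?e = "int (RR C i) - int (RR C (i+1))"
  have sne: "swap C i \<noteq> C"
  proof
    assume "swap C i = C"
    then have "swap C i ! i = C ! i" by simp
    then show False using ne i by (simp add: swap_def nth_list_update)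
  qed
  have g: "gg k r > 0" unfolding gg_def by simp
  have Gne: "(of_nat (gg k r) :: rat) \<noteq> 0" using g by simp
  have notin: "u_ratio k r C i \<notin> {(1, 0), t_mono k r, t_inv_mono k r}"
  proof
    assume mem: "u_ratio k r C i \<in> {(1, 0), t_mono k r, t_inv_mono k r}"
    have f1: "fst (u_ratio k r C i) = 1" using mem by (auto simp: t_mono_def t_inv_mono_def)
    then have "tau r powi (- (C!i)) / tau r powi (- (C!(i+1))) = 1"
      by (simp add: u_ratio_def mono_div_def xval_def)
    then have dv: "int (r-1) dvd ?D" using tau_ratio_dvd[OF r] by blast
    then obtain m where m: "?D = int (r-1) * m" by blast
    have rpos: "int (r-1) > 0" using r by simp
    have mdiv: "?D div int (r-1) = m" using m rpos by simp
    have rhoi: "rho C ! i - rho C ! (i+1) = of_int ?e" using i by (simp add: rho_nth)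
    have alg: "\<And>a b x y R K :: rat. (- a * R + x * K) - (- b * R + y * K) = (x - y) * K - (a - b) * R"
      by algebra
    have snd_eq: "snd (u_ratio k r C i) =
        (of_int ?D * of_nat (k+1) - of_int ?e * of_nat (r-1)) / of_nat (gg k r)"
      unfolding u_ratio_def mono_div_def xval_def snd_conv diff_divide_distrib[symmetric] alg rhoi
      by simp
    have "snd (u_ratio k r C i) \<in> {0, of_nat (r-1) / of_nat (gg k r), - of_nat (r-1) / of_nat (gg k r)}"
      using mem by (auto simp: t_mono_def t_inv_mono_def)
    then have X: "(of_int ?D * of_nat (k+1) - of_int ?e * of_nat (r-1) :: rat) \<in> {0, of_nat (r-1), - of_nat (r-1)}"
      using div3_aux[OF Gne] unfolding snd_eq by blast
    define y where "y = m * int (k+1) - ?e"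
    have Xi: "(of_int ?D * of_nat (k+1) - of_int ?e * of_nat (r-1) :: rat) = of_int (int (r-1) * y)"
      unfolding y_def m by (simp add: algebra_simps)
    have "of_int (int (r-1) * y) \<in> {0 :: rat, of_int (int (r-1)), - of_int (int (r-1))}"
      using X unfolding Xi by simp
    then have "y \<in> {0, 1, -1}" using rpos by (intro int3_aux) 
    then have "\<bar>m * int (k+1) - ?e\<bar> \<le> 1" unfolding y_def by auto
    then have "blk k r ?D ?e" unfolding blk_def using ne dv mdiv by auto
    then show False using nb by simp
  qed
  show ?thesis unfolding inter_step_def using i sne notin by blast
qed




section \<open>Block property\<close>

definition Bp :: "nat \<Rightarrow> nat \<Rightarrow> int list \<Rightarrow> bool" where
  "Bp k r L \<longleftrightarrow> (\<forall>x y. x < length L \<longrightarrow> y < length L \<longrightarrow> RR L x = RR L y + k \<longrightarrow>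
     (L!x - L!y \<ge> int (r-1) \<and> (L!x - L!y = int (r-1) \<longrightarrow> x \<le> y)))"

lemma inB_Bp: assumes "in_B k r L" shows "Bp k r L"
  unfolding Bp_def
proof (intro allI impI)
  fix x y assume x: "x < length L" and y: "y < length L" and R: "RR L x = RR L y + k"
  have rr: "rho L ! x - rho L ! y = of_nat (k+1) - 1"
    using x y R by (simp add: rho_nth)
  have "\<not> neighborhood (k+1) (r-1) L x y" using assms unfolding in_B_def by blast
  then have "\<not> (L!x - L!y \<le> int (r-1) - 1 \<or> (L!x - L!y = int (r-1) \<and> y < x))"
    unfolding neighborhood_def using x y rr by blast
  then show "L!x - L!y \<ge> int (r-1) \<and> (L!x - L!y = int (r-1) \<longrightarrow> x \<le> y)" by auto
qed

lemma chain:
  assumes B: "Bp k r L"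
  shows "x < length L \<Longrightarrow> y < length L \<Longrightarrow> RR L x \<ge> RR L y + m * k \<Longrightarrow>
     L!x - L!y \<ge> int m * int (r-1) \<and> (L!x - L!y = int m * int (r-1) \<longrightarrow> x \<le> y)"
proof (induction m arbitrary: x)
  case 0
  then show ?case using RR_le_val[of x L y] by auto
next
  case (Suc m)
  have "RR L x \<ge> k" using Suc.prems(3) by simp
  have "RR L x - k < length L" using RR_bound[OF Suc.prems(1)] by simp
  then obtain z where z: "z < length L" "RR L z = RR L x - k" by (rule RR_surj)
  have xz: "RR L x = RR L z + k" using z \<open>RR L x \<ge> k\<close> by simp
  have b1: "L!x - L!z \<ge> int (r-1)" "L!x - L!z = int (r-1) \<longrightarrow> x \<le> z"
    using B Suc.prems(1) z(1) xz unfolding Bp_def by blast+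
  have "RR L z \<ge> RR L y + m * k" using Suc.prems(3) z by simp
  then have b2: "L!z - L!y \<ge> int m * int (r-1)" "L!z - L!y = int m * int (r-1) \<longrightarrow> z \<le> y"
    using Suc.IH[OF z(1) Suc.prems(2)] by blast+
  have "L!x - L!y = (L!x - L!z) + (L!z - L!y)" by simp
  then show ?case using b1 b2 by (auto simp: algebra_simps)
qed

lemma chain_int:
  assumes B: "Bp k r L" and x: "x < length L" and y: "y < length L"
    and g: "int (RR L x) - int (RR L y) \<ge> int m * int k"
  shows "L!x - L!y \<ge> int m * int (r-1) \<and> (L!x - L!y = int m * int (r-1) \<longrightarrow> x \<le> y)"
proof -
  have "int (m * k) \<le> int (RR L x) - int (RR L y)" using g by (simp only: of_nat_mult)
  then have "RR L x \<ge> RR L y + m * k" by linarith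
  then show ?thesis using chain[OF B x y] by blast
qed

lemma blk_neg: assumes "blk k r D e" shows "blk k r (- D) (- e)"
proof -
  from assms obtain m where m: "D = int (r-1) * m" unfolding blk_def by blast
  show ?thesis
  proof (cases "r - 1 = 0")
    case True then show ?thesis using assms unfolding blk_def by auto
  next
    case False
    have m2: "- D = int (r-1) * (- m)" using m by simp
    have "D div int (r-1) = m" using m False by simp
    moreover have "(- D) div int (r-1) = - m" unfolding m2 by (rule nonzero_mult_div_cancel_left) (use False in simp)
    ultimately show ?thesis using assms unfolding blk_def by (auto simp: m)
  qed
qed

lemma blk_gap:
  assumes r: "2 \<le> r" and b: "blk k r D e" and D: "D > 0"
  obtains m :: nat where "D = int m * int (r-1)" "e \<ge> int m * int k"
proof -
  from b obtain mi where m: "D = int (r-1) * mi" unfolding blk_def by blast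
  have rp: "int (r-1) > 0" using r by simp
  have mdiv: "D div int (r-1) = mi" using m rp by simp
  have mi: "mi > 0" using D m rp by (simp add: zero_less_mult_iff)
  have "\<bar>mi * int (k+1) - e\<bar> \<le> 1" using b mdiv unfolding blk_def by simp
  then have "e \<ge> mi * int k + mi - 1" by (simp add: algebra_simps)
  then have e: "e \<ge> mi * int k" using mi by simp
  show ?thesis
  proof (rule that[of "nat mi"])
    show "D = int (nat mi) * int (r-1)" using m mi by simp
    show "e \<ge> int (nat mi) * int k" using e mi by simp
  qed
qed

section \<open>Rank invariance under permutations\<close>

lemma RR_perm:
  assumes len: "length C = length L" and inj: "inj_on s {0..<length L}"
    and img: "s ` {0..<length L} = {0..<length L}"
    and val: "\<And>z. z < length L \<Longrightarrow> C!z = L!(s z)"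
    and ord: "\<And>z z'. z < length L \<Longrightarrow> z' < length L \<Longrightarrow> L!(s z) = L!(s z') \<Longrightarrow> (z < z' \<longleftrightarrow> s z < s z')"
    and z: "z < length L"
  shows "RR C z = RR L (s z)"
proof -
  let ?A = "{w. w < length C \<and> below C w z}"
  let ?B = "{u. u < length L \<and> below L u (s z)}"
  have sub: "?A \<subseteq> {0..<length L}" using len by auto
  have "s ` ?A = ?B"
  proof
    show "s ` ?A \<subseteq> ?B"
    proof
      fix u assume "u \<in> s ` ?A"
      then obtain w where w: "w < length L" "below C w z" "u = s w" using len by auto
      have "s w < length L" using img w(1) by auto
      moreover have "below L (s w) (s z)"
        using w(2) val[OF w(1)] val[OF z] ord[OF z w(1)] unfolding below_def by auto
      ultimately show "u \<in> ?B" using w by simp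
    qed
  next
    show "?B \<subseteq> s ` ?A"
    proof
      fix u assume u: "u \<in> ?B"
      then have "u \<in> s ` {0..<length L}" using img by simp
      then obtain w where w: "w < length L" "u = s w" by auto
      have "below C w z"
        using u w val[OF w(1)] val[OF z] ord[OF z w(1)] unfolding below_def by auto
      then show "u \<in> s ` ?A" using w len by auto
    qed
  qed
  moreover have "inj_on s ?A" using inj sub by (rule inj_on_subset)
  ultimately show ?thesis unfolding RR_def using card_image by metis
qed

section \<open>Moving one entry\<close>

definition sig :: "nat \<Rightarrow> nat \<Rightarrow> nat \<Rightarrow> nat" where
  "sig p j z = (if z = j then p else if j \<le> p then (if j < z \<and> z \<le> p then z - 1 else z)
       else (if p \<le> z \<and> z < j then z + 1 else z))"

definition mv :: "int list \<Rightarrow> nat \<Rightarrow> nat \<Rightarrow> int list" where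
  "mv L p j = map (\<lambda>z. L ! sig p j z) [0..<length L]"

lemma length_mv [simp]: "length (mv L p j) = length L" by (simp add: mv_def)

lemma nth_mv: "z < length L \<Longrightarrow> mv L p j ! z = L ! sig p j z" by (simp add: mv_def)

lemma sig_range: "p < n \<Longrightarrow> j < n \<Longrightarrow> z < n \<Longrightarrow> sig p j z < n"
  unfolding sig_def by auto

lemma sig_inj: "inj_on (sig p j) A"
  unfolding inj_on_def sig_def by (auto split: if_splits)

lemma sig_img: "p < n \<Longrightarrow> j < n \<Longrightarrow> sig p j ` {0..<n} = {0..<n}"
  by (rule endo_inj_surj) (auto simp: sig_inj sig_range)

lemma sig_order:
  assumes "\<not> (a = j \<and> ((j \<le> p \<and> j < b \<and> b \<le> p) \<or> (p < j \<and> p \<le> b \<and> b < j)))"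
    "\<not> (b = j \<and> ((j \<le> p \<and> j < a \<and> a \<le> p) \<or> (p < j \<and> p \<le> a \<and> a < j)))"
  shows "a < b \<longleftrightarrow> sig p j a < sig p j b"
  using assms by (cases "j \<le> p"; cases "a = j"; cases "b = j"; simp add: sig_def; arith)

lemma RR_mv:
  assumes p: "p < length L" and j: "j < length L" and z: "z < length L"
    and ne: "\<And>w. w < length L \<Longrightarrow> (j \<le> w \<and> w < p) \<or> (p < w \<and> w \<le> j) \<Longrightarrow> L!w \<noteq> L!p"
  shows "RR (mv L p j) z = RR L (sig p j z)"
proof (rule RR_perm)
  show "length (mv L p j) = length L" by simp
  show "inj_on (sig p j) {0..<length L}" by (rule sig_inj)
  show "sig p j ` {0..<length L} = {0..<length L}" using p j by (rule sig_img)
  show "\<And>z. z < length L \<Longrightarrow> mv L p j ! z = L ! sig p j z" by (rule nth_mv)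
  show "z < length L" by fact
  fix a b assume a: "a < length L" and b: "b < length L" and eq: "L ! sig p j a = L ! sig p j b"
  show "a < b \<longleftrightarrow> sig p j a < sig p j b"
  proof -
    have "\<not> (a = j \<and> ((j \<le> p \<and> j < b \<and> b \<le> p) \<or> (p < j \<and> p \<le> b \<and> b < j)))"
    proof
      assume h: "a = j \<and> ((j \<le> p \<and> j < b \<and> b \<le> p) \<or> (p < j \<and> p \<le> b \<and> b < j))"
      then have "sig p j a = p" by (simp add: sig_def)
      moreover have "L ! sig p j b \<noteq> L ! p"
      proof (rule ne)
        show "sig p j b < length L" using sig_range p j b by blast
        show "(j \<le> sig p j b \<and> sig p j b < p) \<or> (p < sig p j b \<and> sig p j b \<le> j)"
          using h unfolding sig_def by auto
      qed
      ultimately show False using eq by simp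
    qed
    moreover have "\<not> (b = j \<and> ((j \<le> p \<and> j < a \<and> a \<le> p) \<or> (p < j \<and> p \<le> a \<and> a < j)))"
    proof
      assume h: "b = j \<and> ((j \<le> p \<and> j < a \<and> a \<le> p) \<or> (p < j \<and> p \<le> a \<and> a < j))"
      then have "sig p j b = p" by (simp add: sig_def)
      moreover have "L ! sig p j a \<noteq> L ! p"
      proof (rule ne)
        show "sig p j a < length L" using sig_range p j a by blast
        show "(j \<le> sig p j a \<and> sig p j a < p) \<or> (p < sig p j a \<and> sig p j a \<le> j)"
          using h unfolding sig_def by auto
      qed
      ultimately show False using eq by simp
    qed
    ultimately show ?thesis by (rule sig_order)
  qed
qed

lemma mv_same: "mv L p p = L"
  by (rule nth_equalityI) (auto simp: nth_mv sig_def)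

lemma swap_mv_down:
  assumes "j + 1 \<le> p" "p < length L"
  shows "swap (mv L p (j+1)) j = mv L p j"
  by (rule nth_equalityI) (use assms in \<open>auto simp: swap_def nth_list_update nth_mv sig_def\<close>)

lemma swap_mv_up:
  assumes "p \<le> j" "j + 1 < length L"
  shows "swap (mv L p j) j = mv L p (j+1)"
  by (rule nth_equalityI) (use assms in \<open>auto simp: swap_def nth_list_update nth_mv sig_def\<close>)

lemma omega_mv:
  assumes p: "p < length L"
  shows "omega (mv L p 0) = mv (L[p := L!p + 1]) p (length L - 1)"
proof (rule nth_equalityI)
  have "length (mv L p 0) \<noteq> 0" using p by (simp only: length_mv)
  then have ne: "mv L p 0 \<noteq> []" by (metis list.size(3))
  have m0: "mv L p 0 ! 0 = L ! p" using p by (subst nth_mv) (auto simp: sig_def)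
  show "length (omega (mv L p 0)) = length (mv (L[p := L!p + 1]) p (length L - 1))"
    using p by (simp add: omega_def)
  fix z assume "z < length (omega (mv L p 0))"
  then have z: "z < length L" using p by (simp add: omega_def)
  show "omega (mv L p 0) ! z = mv (L[p := L!p + 1]) p (length L - 1) ! z"
  proof (cases "z = length L - 1")
    case True
    then show ?thesis using p ne m0
      by (simp add: omega_def nth_append hd_conv_nth nth_mv sig_def nth_list_update)
  next
    case False
    then have z1: "z < length L - 1" using z by simp
    then show ?thesis using p ne
      by (auto simp: omega_def nth_append nth_tl nth_mv sig_def nth_list_update)
  qed
qed

lemma intertwined_refl: "intertwined k r a a" unfolding intertwined_def by simp

lemma intertwined_trans: "intertwined k r a b \<Longrightarrow> intertwined k r b c \<Longrightarrow> intertwined k r a c"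
  unfolding intertwined_def by (rule rtranclp_trans)

lemma intertwined_sym: assumes "intertwined k r a b" shows "intertwined k r b a"
  using assms unfolding intertwined_def
proof (induction rule: rtranclp_induct)
  case base then show ?case by simp
next
  case (step y z)
  then have "(\<lambda>x y. inter_step k r x y \<or> inter_step k r y x) z y" by blast
  then show ?case using step.IH by (rule converse_rtranclp_into_rtranclp)
qed

lemma intertwined_step: "inter_step k r a b \<Longrightarrow> intertwined k r a b"
  unfolding intertwined_def by (simp add: r_into_rtranclp)

lemma intertwined_omega: "intertwined k r a (omega a)"
  by (rule intertwined_step) (simp add: inter_step_def)




lemma path:
  assumes r: "2 \<le> r" and Bm: "Bp k r mu" and Bn: "Bp k r nu"
    and nu: "nu = mu[p := mu!p + 1]" and p: "p < length mu"
    and RRe: "\<And>i. i < length mu \<Longrightarrow> RR nu i = RR mu i"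
  shows "intertwined k r mu nu"
proof -
  let ?n = "length mu"
  have ln: "length nu = ?n" using nu by simp
  have nup: "nu!p = mu!p + 1" using nu p by simp
  have nuw: "\<And>w. w \<noteq> p \<Longrightarrow> nu!w = mu!w" using nu by simp
  have a: "mu!w \<noteq> mu!p" if w: "w < p" for w
  proof
    assume eq: "mu!w = mu!p"
    have wn: "w < ?n" using w p by simp
    have "below mu p w" using eq w unfolding below_def by simp
    then have "RR mu p < RR mu w" using RR_less_iff[of w mu p] wn p by simp
    moreover have "below nu w p" using eq w nup nuw[of w] unfolding below_def by simp
    then have "RR nu w < RR nu p" using RR_less_iff[of p nu w] wn p ln by simp
    ultimately show False using RRe[OF wn] RRe[OF p] by simp
  qed
  have b: "nu!w \<noteq> nu!p" if w: "p < w" "w < ?n" for w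
  proof
    assume eq: "nu!w = nu!p"
    have "mu!w = mu!p + 1" using eq nup nuw[of w] w by simp
    then have "below mu p w" unfolding below_def by simp
    then have "RR mu p < RR mu w" using RR_less_iff[of w mu p] w p by simp
    moreover have "below nu w p" using eq w unfolding below_def by simp
    then have "RR nu w < RR nu p" using RR_less_iff[of p nu w] w p ln by simp
    ultimately show False using RRe[OF w(2)] RRe[OF p] by simp
  qed
  have nb1: "\<not> blk k r (mu!w - mu!p) (int (RR mu w) - int (RR mu p))" if w: "w < p" for w
  proof
    assume bl: "blk k r (mu!w - mu!p) (int (RR mu w) - int (RR mu p))"
    have wn: "w < ?n" using w p by simp
    consider "mu!w > mu!p" | "mu!w < mu!p" using a[OF w] by fastforce
    then show False
    proof cases
      case 1
      then obtain m where m: "mu!w - mu!p = int m * int (r-1)" "int (RR mu w) - int (RR mu p) \<ge> int m * int k"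
        using blk_gap[OF r bl] by auto
      have "int (RR nu w) - int (RR nu p) \<ge> int m * int k" using m RRe[OF wn] RRe[OF p] by simp
      then have "nu!w - nu!p \<ge> int m * int (r-1)" using chain_int[OF Bn] wn p ln by auto
      moreover have "nu!w - nu!p = mu!w - mu!p - 1" using nup nuw[of w] w by simp
      ultimately show False using m by simp
    next
      case 2
      have bl2: "blk k r (mu!p - mu!w) (int (RR mu p) - int (RR mu w))"
        using blk_neg[OF bl] by simp
      then obtain m where m: "mu!p - mu!w = int m * int (r-1)" "int (RR mu p) - int (RR mu w) \<ge> int m * int k"
        using blk_gap[OF r bl2] 2 by auto
      then have "p \<le> w" using chain_int[OF Bm p wn] by auto
      then show False using w by simp
    qed
  qed
  have nb2: "\<not> blk k r (nu!p - nu!w) (int (RR nu p) - int (RR nu w))" if w: "p < w" "w < ?n" for w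
  proof
    assume bl: "blk k r (nu!p - nu!w) (int (RR nu p) - int (RR nu w))"
    consider "nu!p > nu!w" | "nu!p < nu!w" using b[OF w] by fastforce
    then show False
    proof cases
      case 1
      then obtain m where m: "nu!p - nu!w = int m * int (r-1)" "int (RR nu p) - int (RR nu w) \<ge> int m * int k"
        using blk_gap[OF r bl] by auto
      have "int (RR mu p) - int (RR mu w) \<ge> int m * int k" using m RRe[OF w(2)] RRe[OF p] by simp
      then have "mu!p - mu!w \<ge> int m * int (r-1)" using chain_int[OF Bm p w(2)] by auto
      moreover have "nu!p - nu!w = mu!p - mu!w + 1" using nup nuw[of w] w by simp
      ultimately show False using m by simp
    next
      case 2
      have bl2: "blk k r (nu!w - nu!p) (int (RR nu w) - int (RR nu p))"
        using blk_neg[OF bl] by simp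
      then obtain m where m: "nu!w - nu!p = int m * int (r-1)" "int (RR nu w) - int (RR nu p) \<ge> int m * int k"
        using blk_gap[OF r bl2] 2 by auto
      then have "w \<le> p" using chain_int[OF Bn] w p ln by auto
      then show False using w by simp
    qed
  qed
  have ph1: "d \<le> p \<Longrightarrow> intertwined k r mu (mv mu p (p - d))" for d
  proof (induction d)
    case 0 then show ?case by (simp add: mv_same intertwined_refl)
  next
    case (Suc d)
    define j where "j = p - Suc d"
    have j1: "j + 1 = p - d" "j + 1 \<le> p" using Suc.prems unfolding j_def by auto
    have IH: "intertwined k r mu (mv mu p (j+1))" using Suc.IH Suc.prems j1 by simp
    define C where "C = mv mu p (j+1)"
    have jn: "j + 1 < length C" using j1 p unfolding C_def by simp
    have sw: "swap C j = mv mu p j" unfolding C_def using swap_mv_down j1 p by blast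
    have cond: "\<And>w. w < ?n \<Longrightarrow> (j + 1 \<le> w \<and> w < p) \<or> (p < w \<and> w \<le> j + 1) \<Longrightarrow> mu!w \<noteq> mu!p"
      using a j1 by auto
    have s1: "sig p (j+1) j = j" "sig p (j+1) (j+1) = p" using j1 by (auto simp: sig_def)
    have c1: "C!j = mu!j" "C!(j+1) = mu!p" using s1 jn unfolding C_def by (simp_all add: nth_mv)
    have r1: "RR C j = RR mu j" "RR C (j+1) = RR mu p"
      using RR_mv[of p mu "j+1" j] RR_mv[of p mu "j+1" "j+1"] cond s1 jn p unfolding C_def by auto
    have jp: "j < p" using j1 by simp
    have "inter_step k r C (swap C j)"
    proof (rule swap_step[OF r jn])
      show "C!j \<noteq> C!(j+1)" using c1 a[OF jp] by simp
      show "\<not> blk k r (C!j - C!(j+1)) (int (RR C j) - int (RR C (j+1)))"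
        using c1 r1 nb1[OF jp] by simp
    qed
    then have "intertwined k r C (mv mu p j)" using sw intertwined_step by metis
    then show ?case using IH unfolding C_def j_def by (metis intertwined_trans)
  qed
  have ph2: "p + d < ?n \<Longrightarrow> intertwined k r nu (mv nu p (p + d))" for d
  proof (induction d)
    case 0 then show ?case by (simp add: mv_same intertwined_refl)
  next
    case (Suc d)
    define j where "j = p + d"
    have jn0: "j + 1 < ?n" using Suc.prems unfolding j_def by simp
    have IH: "intertwined k r nu (mv nu p j)" using Suc.IH Suc.prems unfolding j_def by simp
    define E where "E = mv nu p j"
    have jn: "j + 1 < length E" using jn0 ln unfolding E_def by simp
    have sw: "swap E j = mv nu p (j+1)" unfolding E_def using swap_mv_up[of p j nu] jn0 ln j_def by simp
    have cond: "\<And>w. w < length nu \<Longrightarrow> (j \<le> w \<and> w < p) \<or> (p < w \<and> w \<le> j) \<Longrightarrow> nu!w \<noteq> nu!p"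
      using b j_def ln by auto
    have s1: "sig p j j = p" "sig p j (j+1) = j+1" unfolding j_def by (auto simp: sig_def)
    have c1: "E!j = nu!p" "E!(j+1) = nu!(j+1)" using s1 jn ln unfolding E_def by (simp_all add: nth_mv)
    have r1: "RR E j = RR nu p" "RR E (j+1) = RR nu (j+1)"
      using RR_mv[of p nu j j] RR_mv[of p nu j "j+1"] cond s1 jn0 p ln unfolding E_def by auto
    have pj: "p < j + 1" "j + 1 < ?n" using jn0 j_def by auto
    have "inter_step k r E (swap E j)"
    proof (rule swap_step[OF r jn])
      show "E!j \<noteq> E!(j+1)" using c1 b[OF pj] by simp
      show "\<not> blk k r (E!j - E!(j+1)) (int (RR E j) - int (RR E (j+1)))"
        using c1 r1 nb2[OF pj] by simp
    qed
    then have "intertwined k r E (mv nu p (j+1))" using sw intertwined_step by metis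
    then show ?case using IH unfolding E_def j_def by (metis intertwined_trans add_Suc_right Suc_eq_plus1)
  qed
  have i1: "intertwined k r mu (mv mu p 0)" using ph1[of p] by simp
  have "omega (mv mu p 0) = mv nu p (?n - 1)" using omega_mv[OF p] nu by simp
  then have i2: "intertwined k r (mv mu p 0) (mv nu p (?n - 1))" using intertwined_omega by metis
  have "p + (?n - 1 - p) < ?n" using p by simp
  then have i3: "intertwined k r nu (mv nu p (?n - 1))" using ph2[of "?n - 1 - p"] p by simp
  show ?thesis using i1 i2 intertwined_sym[OF i3] by (metis intertwined_trans)
qed




definition mono_delta :: "int list \<Rightarrow> int list \<Rightarrow> bool" where
  "mono_delta L0 M \<longleftrightarrow> length M = length L0 \<and> (\<forall>x y. x < length L0 \<longrightarrow> y < length L0 \<longrightarrow>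
     RR L0 y \<le> RR L0 x \<longrightarrow> M!y - L0!y \<le> M!x - L0!x)"

lemma md_below:
  assumes md: "mono_delta L0 M" and z: "z < length L0" and i: "i < length L0"
    and bl: "below L0 z i"
  shows "below M z i"
proof -
  have "RR L0 z < RR L0 i" using RR_less_iff[OF i z] bl by simp
  then have "M!z - L0!z \<le> M!i - L0!i" using md z i unfolding mono_delta_def by auto
  then show ?thesis using bl unfolding below_def by auto
qed

lemma md_RR:
  assumes md: "mono_delta L0 M" and i: "i < length L0"
  shows "RR M i = RR L0 i"
proof -
  have len: "length M = length L0" using md unfolding mono_delta_def by simp
  have "{z. z < length M \<and> below M z i} = {z. z < length L0 \<and> below L0 z i}"
  proof (intro set_eqI iffI)
    fix z assume "z \<in> {z. z < length L0 \<and> below L0 z i}"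
    then show "z \<in> {z. z < length M \<and> below M z i}" using md_below[OF md _ i] len by auto
  next
    fix z assume h: "z \<in> {z. z < length M \<and> below M z i}"
    then have z: "z < length L0" and bM: "below M z i" using len by auto
    show "z \<in> {z. z < length L0 \<and> below L0 z i}"
    proof (rule ccontr)
      assume "z \<notin> {z. z < length L0 \<and> below L0 z i}"
      then have "\<not> below L0 z i" using z by simp
      then have "z = i \<or> below L0 i z" using below_total by blast
      then show False
      proof
        assume "z = i" then show False using bM below_irrefl by metis
      next
        assume "below L0 i z"
        then have "below M i z" using md_below[OF md i z] by simp
        then show False using bM below_asym by metis
      qed
    qed
  qed
  then show ?thesis unfolding RR_def len by simp
qed

lemma md_Bp:
  assumes B: "Bp k r L0" and md: "mono_delta L0 M"
  shows "Bp k r M"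
  unfolding Bp_def
proof (intro allI impI)
  fix x y assume x: "x < length M" and y: "y < length M" and R: "RR M x = RR M y + k"
  have len: "length M = length L0" using md unfolding mono_delta_def by simp
  have x0: "x < length L0" and y0: "y < length L0" using x y len by auto
  have R0: "RR L0 x = RR L0 y + k" using R md_RR[OF md x0] md_RR[OF md y0] by simp
  have b: "L0!x - L0!y \<ge> int (r-1)" "L0!x - L0!y = int (r-1) \<longrightarrow> x \<le> y"
    using B x0 y0 R0 unfolding Bp_def by blast+
  have "M!y - L0!y \<le> M!x - L0!x" using md x0 y0 R0 unfolding mono_delta_def by auto
  then show "M!x - M!y \<ge> int (r-1) \<and> (M!x - M!y = int (r-1) \<longrightarrow> x \<le> y)" using b by auto
qed

lemma main_ind:
  assumes r: "2 \<le> r" and B: "Bp k r L0"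
  shows "\<forall>M. (\<Sum>x<length L0. nat (M!x - L0!x)) = s \<longrightarrow> mono_delta L0 M \<longrightarrow>
      (\<forall>x<length L0. L0!x \<le> M!x) \<longrightarrow> intertwined k r L0 M"
proof (induction s rule: less_induct)
  case (less s)
  show ?case
  proof (intro allI impI)
    fix M assume s: "(\<Sum>x<length L0. nat (M!x - L0!x)) = s" and md: "mono_delta L0 M"
      and ge: "\<forall>x<length L0. L0!x \<le> M!x"
    have len: "length M = length L0" using md unfolding mono_delta_def by simp
    show "intertwined k r L0 M"
    proof (cases "\<forall>x<length L0. M!x = L0!x")
      case True
      then have "M = L0" using len by (simp add: nth_equalityI)
      then show ?thesis by (simp add: intertwined_refl)
    next
      case False
      then obtain x0 where "x0 < length L0 \<and> L0!x0 < M!x0" using ge by force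
      then obtain p where pP: "p < length L0 \<and> L0!p < M!p"
        and pmin: "\<forall>y. y < length L0 \<and> L0!y < M!y \<longrightarrow> RR L0 p \<le> RR L0 y"
        using ex_has_least_nat[of "\<lambda>x. x < length L0 \<and> L0!x < M!x" x0 "RR L0"] by blast
      have p: "p < length L0" and pl: "L0!p < M!p" using pP by auto
      define M' where "M' = M[p := M!p - 1]"
      have len': "length M' = length L0" using len unfolding M'_def by simp
      have M'p: "M'!p = M!p - 1" using p len unfolding M'_def by simp
      have M'w: "\<And>w. w \<noteq> p \<Longrightarrow> M'!w = M!w" unfolding M'_def by simp
      have md': "mono_delta L0 M'"
        unfolding mono_delta_def
      proof (intro conjI allI impI)
        show "length M' = length L0" by (rule len')
        fix x y assume x: "x < length L0" and y: "y < length L0" and R: "RR L0 y \<le> RR L0 x"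
        have dxy: "M!y - L0!y \<le> M!x - L0!x" using md x y R unfolding mono_delta_def by auto
        show "M'!y - L0!y \<le> M'!x - L0!x"
        proof (cases "x = y")
          case True then show ?thesis by simp
        next
          case xy: False
          show ?thesis
          proof (cases "x = p")
            case True
            then have yp: "y \<noteq> p" using xy by simp
            have "RR L0 y \<noteq> RR L0 x" using RR_inj[of L0] x y xy unfolding inj_on_def by auto
            then have "RR L0 y < RR L0 p" using R True by simp
            then have "\<not> (L0!y < M!y)" using pmin y by force
            then show ?thesis using True yp M'p M'w[of y] pl by simp
          next
            case False
            then show ?thesis using dxy M'p M'w[of x] M'w[of y] by (cases "y = p") auto
          qed
        qed
      qed
      have ge': "\<forall>x<length L0. L0!x \<le> M'!x"
        using ge pl M'p M'w by (metis zle_diff1_eq)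
      have lt: "(\<Sum>x<length L0. nat (M'!x - L0!x)) < (\<Sum>x<length L0. nat (M!x - L0!x))"
      proof (rule sum_strict_mono_ex1)
        show "finite {..<length L0}" by simp
        show "\<forall>x\<in>{..<length L0}. nat (M'!x - L0!x) \<le> nat (M!x - L0!x)"
        proof
          fix x
          have "M'!x \<le> M!x" by (cases "x = p") (simp_all add: M'p M'w)
          then show "nat (M'!x - L0!x) \<le> nat (M!x - L0!x)" by (intro nat_mono) simp
        qed
        show "\<exists>x\<in>{..<length L0}. nat (M'!x - L0!x) < nat (M!x - L0!x)"
          using p pl M'p by (intro bexI[of _ p]) auto
      qed
      have IH: "intertwined k r L0 M'" using less.IH[of "\<Sum>x<length L0. nat (M'!x - L0!x)"] lt s md' ge' by blast
      have MM: "M = M'[p := M'!p + 1]" using M'p unfolding M'_def by simp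
      have "intertwined k r M' M"
      proof (rule path[OF r _ _ MM])
        show "Bp k r M'" using md_Bp[OF B md'] .
        show "Bp k r M" using md_Bp[OF B md] .
        show "p < length M'" using p len' by simp
        fix i assume "i < length M'"
        then show "RR M i = RR M' i" using md_RR[OF md] md_RR[OF md'] len' by simp
      qed
      then show ?thesis using IH by (rule intertwined_trans[rotated])
    qed
  qed
qed

lemma omega_pow: "j \<le> length X \<Longrightarrow> (omega ^^ j) X = drop j X @ map (\<lambda>v. v + 1) (take j X)"
proof (induction j)
  case 0 then show ?case by simp
next
  case (Suc j)
  then have j: "j < length X" by simp
  have d: "drop j X = X!j # drop (Suc j) X" using j by (rule Cons_nth_drop_Suc[symmetric])
  have t: "take (Suc j) X = take j X @ [X!j]" using j by (rule take_Suc_conv_app_nth)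
  have "(omega ^^ Suc j) X = omega (drop j X @ map (\<lambda>v. v + 1) (take j X))" using Suc by simp
  also have "\<dots> = drop (Suc j) X @ map (\<lambda>v. v + 1) (take (Suc j) X)"
    unfolding d t omega_def by simp
  finally show ?case .
qed

lemma intertwined_pow: "intertwined k r X ((omega ^^ j) X)"
proof (induction j)
  case 0 then show ?case by (simp add: intertwined_refl)
next
  case (Suc j)
  then show ?case using intertwined_omega[of k r "(omega ^^ j) X"] by (simp add: intertwined_trans)
qed

lemma shift: "intertwined k r X (map (\<lambda>v. v + int c) X)"
proof (induction c)
  case 0 then show ?case by (simp add: intertwined_refl)
next
  case (Suc c)
  let ?Y = "map (\<lambda>v. v + int c) X"
  have "(omega ^^ length ?Y) ?Y = map (\<lambda>v. v + 1) ?Y" using omega_pow[of "length ?Y" ?Y] by simp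
  then have "intertwined k r ?Y (map (\<lambda>v. v + 1) ?Y)" using intertwined_pow by metis
  moreover have "map (\<lambda>v. v + 1) ?Y = map (\<lambda>v. v + int (Suc c)) X" by (simp add: algebra_simps)
  ultimately show ?case using Suc.IH by (metis intertwined_trans)
qed

lemma idx_char:
  assumes x: "x < length l" and a: "RR l x + a = length l"
  shows "idx l a = x"
  unfolding idx_def
proof (rule the_equality)
  have "of_nat (RR l x) = (of_nat (length l) - of_nat a :: rat)" using a by (simp add: algebra_simps flip: of_nat_add)
  then show "x < length l \<and> rho l ! x = (of_nat (length l) + 1) / 2 - of_nat a"
    using x by (simp add: rho_nth field_simps)
next
  fix i assume h: "i < length l \<and> rho l ! i = (of_nat (length l) + 1) / 2 - of_nat a"
  have "of_nat (RR l x) = (of_nat (length l) - of_nat a :: rat)" using a by (simp add: algebra_simps flip: of_nat_add)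
  moreover have i: "i < length l" and hr: "rho l ! i = (of_nat (length l) + 1) / 2 - of_nat a" using h by auto
  ultimately have "(of_nat (RR l i) :: rat) = of_nat (RR l x)" by (simp add: rho_nth field_simps)
  then have "RR l i = RR l x" by simp
  then show "i = x" using RR_inj[of l] h x unfolding inj_on_def by auto
qed




theorem lemma4p4:
  fixes n k r :: nat and l l' :: "int list"
  assumes "length l = n" and "1 \<le> k" and "k \<le> n - 1" and "2 \<le> r"
    and "in_B k r l" and "enlargement k r l l'"
  shows "intertwined k r l' l"
proof -
  have ln: "length l = n" and r: "2 \<le> r" using assms by auto
  have n2: "n \<ge> 2" using assms(2,3) by simp
  have B: "Bp k r l" using inB_Bp[OF assms(5)] .
  have len': "length l' = n" and rhoeq: "rho l' = rho l"
    and gapE: "\<And>a. 1 \<le> a \<Longrightarrow> a \<le> n - 1 \<Longrightarrow>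
        l' ! idx l a - l' ! idx l (a+1) > max (int (n div (k+1)) * (int r - 1)) (l ! idx l a - l ! idx l (a+1))"
    using assms(6) ln unfolding enlargement_def by auto
  have RReq: "RR l' i = RR l i" if i: "i < n" for i
  proof -
    have "rho l' ! i = rho l ! i" using rhoeq by simp
    then have "(of_nat (RR l' i) :: rat) = of_nat (RR l i)" using i ln len' by (simp add: rho_nth)
    then show ?thesis by simp
  qed
  define d where "d = (\<lambda>x. l'!x - l!x)"
  have gap1: "d y < d x" if x: "x < n" and y: "y < n" and R: "RR l x = RR l y + 1" for x y
  proof -
    define a where "a = n - RR l x"
    have Rx: "RR l x < n" using RR_bound[of x l] x ln by simp
    have a1: "1 \<le> a" "a \<le> n - 1" using Rx R unfolding a_def by auto
    have ix: "idx l a = x" using idx_char[of x l a] x ln Rx unfolding a_def by simp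
    have iy: "idx l (a+1) = y" using idx_char[of y l "a+1"] y ln Rx R unfolding a_def by simp
    have "l'!x - l'!y > l!x - l!y" using gapE[OF a1] ix iy by simp
    then show ?thesis unfolding d_def by simp
  qed
  have monoD: "\<And>x y. x < n \<Longrightarrow> y < n \<Longrightarrow> RR l x = RR l y + e \<Longrightarrow> d y \<le> d x" for e
  proof (induction e)
    case 0
    then have "x = y" using RR_inj[of l] ln unfolding inj_on_def by auto
    then show ?case by simp
  next
    case (Suc e)
    have "RR l y + e < n" using Suc.prems RR_bound[of x l] ln by simp
    then obtain z where z: "z < n" "RR l z = RR l y + e" using RR_surj[of "RR l y + e" l] ln by metis
    have "d y \<le> d z" using Suc.IH[OF z(1) Suc.prems(2) z(2)] .
    moreover have "d z < d x" using gap1[OF Suc.prems(1) z(1)] Suc.prems(3) z(2) by simp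
    ultimately show ?case by simp
  qed
  have md: "mono_delta l l'"
    unfolding mono_delta_def
  proof (intro conjI allI impI)
    show "length l' = length l" using len' ln by simp
    fix x y assume "x < length l" "y < length l" "RR l y \<le> RR l x"
    then show "l'!y - l!y \<le> l'!x - l!x"
      using monoD[of x y "RR l x - RR l y"] ln unfolding d_def by simp
  qed
  obtain y0 where y0: "y0 < n" "RR l y0 = 0" using RR_surj[of 0 l] ln n2 by (metis gr0I not_numeral_le_zero)
  define c where "c = d y0"
  have cle: "c \<le> d x" if "x < n" for x
    using monoD[of x y0 "RR l x"] that y0 unfolding c_def by simp
  show ?thesis
  proof (cases "c \<ge> 0")
    case True
    have "\<forall>x<length l. l!x \<le> l'!x" using cle True ln unfolding d_def by fastforce
    then have "intertwined k r l l'" using main_ind[OF r B] md by blast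
    then show ?thesis by (rule intertwined_sym)
  next
    case False
    define M where "M = map (\<lambda>v. v + int (nat (- c))) l'"
    have lM: "length M = n" using len' unfolding M_def by simp
    have Mx: "M!x = l'!x + int (nat (- c))" if "x < n" for x using that len' unfolding M_def by simp
    have mdM: "mono_delta l M"
      unfolding mono_delta_def
    proof (intro conjI allI impI)
      show "length M = length l" using lM ln by simp
      fix x y assume "x < length l" "y < length l" "RR l y \<le> RR l x"
      then show "M!y - l!y \<le> M!x - l!x"
        using md Mx ln unfolding mono_delta_def by auto
    qed
    have "\<forall>x<length l. l!x \<le> M!x" using cle False ln Mx unfolding d_def by fastforce
    then have i1: "intertwined k r l M" using main_ind[OF r B] mdM by blast
    have i2: "intertwined k r l' M" unfolding M_def by (rule shift)
    show ?thesis using i2 intertwined_sym[OF i1] by (rule intertwined_trans)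
  qed
qed



end
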